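(* Let $\phi:[0,1]\to[0,1]$ be concave, $\phi(0)=0$, $\phi(1)=1$, continuous at $0$, with right derivative $\phi'(0)=\infty$. Then the Marcinkiewicz norm $\|\cdot\|_{M_\phi}$ is equivalent to the positive translation equivariant Marcinkiewicz norm $\|\cdot\|_{TM_\phi}$, even though \[ C:=\sup_{t\in(0,1)}\ \inf_{t'\in(0,1]}\ \sup_{0<\alpha\le1}\frac{\phi_{TM,t}(\alpha)}{\phi_{M,t'}(\alpha)}=\infty, \] where $\phi_{TM,t}(x)=\phi(t)x/t$ for $x\le t$ and $\phi_{TM,t}(x)=\frac{1-\phi(t)}{1-t}x+\frac{\phi(t)-t}{1-t}$ for $x>t$, and $\phi_{M,t'}(x)=\phi(t')x/t'$ for $x\le t'$ and $\phi_{M,t'}(x)=\phi(t')$ for $x>t'$.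
   Context: $\Omega=[0,1]$ with Lebesgue measure $\mu$; $X^*(\omega)=\inf\{\lambda\ge0:\mu\{|X|>\lambda\}\le\omega\}$. Marcinkiewicz norm $\|X\|_{M_\phi}=\sup_{0<t\le1}\frac{\phi(t)}{t}\int_0^tX^*\,d\omega$; positive translation equivariant Marcinkiewicz norm $\|X\|_{TM_\phi}=\sup_{0<t<1}\{\frac{\phi(t)}{t}\int_0^tX^*\,d\omega+\frac{\phi(t)-1}{t-1}\int_t^1X^*\,d\omega\}$. Two norms are equivalent if the sets of functions on which they are finite coincide and they are bounded by constant multiples of each other there. *)

theory Defs
  imports "HOL-Analysis.Analysis"
begin

definition Omega :: "real measure" where
  "Omega = lebesgue_on {0..1}"

definition rv :: "(real \<Rightarrow> real) set" where
  "rv = borel_measurable Omega"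

definition rearr :: "(real \<Rightarrow> real) \<Rightarrow> real \<Rightarrow> real" where
  "rearr X w = Inf {l. l \<ge> 0 \<and> measure Omega {v \<in> {0..1}. \<bar>X v\<bar> > l} \<le> w}"

definition rint :: "(real \<Rightarrow> real) \<Rightarrow> real \<Rightarrow> real \<Rightarrow> ennreal" where
  "rint X a b = (\<integral>\<^sup>+ w\<in>{a..b}. ennreal (rearr X w) \<partial>lborel)"

definition M_norm :: "(real \<Rightarrow> real) \<Rightarrow> (real \<Rightarrow> real) \<Rightarrow> ennreal" where
  "M_norm \<phi> X = (SUP t\<in>{0<..1}. ennreal (\<phi> t / t) * rint X 0 t)"

definition TM_norm :: "(real \<Rightarrow> real) \<Rightarrow> (real \<Rightarrow> real) \<Rightarrow> ennreal" where
  "TM_norm \<phi> X = (SUP t\<in>{0<..<1}. ennreal (\<phi> t / t) * rint X 0 t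
                                  + ennreal ((\<phi> t - 1) / (t - 1)) * rint X t 1)"

definition norm_equiv :: "((real \<Rightarrow> real) \<Rightarrow> ennreal) \<Rightarrow> ((real \<Rightarrow> real) \<Rightarrow> ennreal) \<Rightarrow> bool" where
  "norm_equiv N1 N2 \<longleftrightarrow>
     (\<forall>X\<in>rv. N1 X < \<infinity> \<longleftrightarrow> N2 X < \<infinity>) \<and>
     (\<exists>c1 c2::real. c1 > 0 \<and> c2 > 0 \<and>
        (\<forall>X\<in>rv. N1 X < \<infinity> \<longrightarrow> N1 X \<le> ennreal c1 * N2 X \<and> N2 X \<le> ennreal c2 * N1 X))"

definition phiTM :: "(real \<Rightarrow> real) \<Rightarrow> real \<Rightarrow> real \<Rightarrow> real" where
  "phiTM \<phi> t x = (if x \<le> t then \<phi> t * x / t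
                   else (1 - \<phi> t) / (1 - t) * x + (\<phi> t - t) / (1 - t))"

definition phiM :: "(real \<Rightarrow> real) \<Rightarrow> real \<Rightarrow> real \<Rightarrow> real" where
  "phiM \<phi> t x = (if x \<le> t then \<phi> t * x / t else \<phi> t)"

end

theory Submission
  imports Defs
begin

lemma phi_ge:
  assumes "concave_on {0..1} \<phi>" "\<phi> 0 = 0" "\<phi> 1 = 1" "0 \<le> t" "t \<le> 1"
  shows "t \<le> \<phi> t"
  using concave_onD[OF assms(1), of t 0 1] assms by simp

lemma rearr_nonempty:
  assumes "X \<in> rv" "w > 0"
  shows "\<exists>l\<ge>0. measure Omega {v\<in>{0..1}. \<bar>X v\<bar> > l} \<le> w"
proof -
  define A where "A n = {v\<in>{0..1}. \<bar>X v\<bar> > real n}" for n :: nat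
  have fm: "finite_measure Omega" unfolding Omega_def
    by (rule finite_measure_lebesgue_on) auto
  have sp: "space Omega = {0..1}" unfolding Omega_def by simp
  have Xm: "X \<in> borel_measurable Omega" using assms(1) unfolding rv_def by simp
  have "A n \<in> sets Omega" for n
  proof -
    have "A n = {v \<in> space Omega. real n < \<bar>X v\<bar>}" unfolding A_def sp by simp
    also have "\<dots> \<in> sets Omega" using Xm by measurable
    finally show ?thesis .
  qed
  moreover have "decseq A" unfolding A_def decseq_def by auto
  ultimately have "(\<lambda>n. measure Omega (A n)) \<longlonglongrightarrow> measure Omega (\<Inter>i. A i)"
    using finite_measure.finite_Lim_measure_decseq[OF fm] by blast
  moreover have "(\<Inter>i. A i) = {}"
  proof safe
    fix x assume "x \<in> (\<Inter>i. A i)"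
    then have "\<bar>X x\<bar> > real (nat (ceiling \<bar>X x\<bar>))" unfolding A_def by blast
    then show "x \<in> {}" by linarith
  qed
  ultimately have "(\<lambda>n. measure Omega (A n)) \<longlonglongrightarrow> 0" by simp
  then obtain n where "measure Omega (A n) < w" 
    using assms(2) by (metis (no_types, lifting) eventually_sequentially order_tendstoD(2) order.refl)
  then show ?thesis unfolding A_def by (intro exI[of _ "real n"]) auto
qed

lemma rearr_antimono:
  assumes "X \<in> rv" "0 < w1" "w1 \<le> w2"
  shows "rearr X w2 \<le> rearr X w1"
  unfolding rearr_def
proof (rule cInf_superset_mono)
  show "{l. 0 \<le> l \<and> measure Omega {v \<in> {0..1}. l < \<bar>X v\<bar>} \<le> w1} \<noteq> {}"
    using rearr_nonempty[OF assms(1,2)] by auto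
  show "bdd_below {l. 0 \<le> l \<and> measure Omega {v \<in> {0..1}. l < \<bar>X v\<bar>} \<le> w2}"
    by (rule bdd_belowI[of _ 0]) auto
  show "{l. 0 \<le> l \<and> measure Omega {v \<in> {0..1}. l < \<bar>X v\<bar>} \<le> w1}
    \<subseteq> {l. 0 \<le> l \<and> measure Omega {v \<in> {0..1}. l < \<bar>X v\<bar>} \<le> w2}"
    using assms(3) by auto
qed

lemma rearr_meas:
  assumes "X \<in> rv"
  shows "(\<lambda>w. ennreal (rearr X w) * indicator {0<..t} w) \<in> borel_measurable lborel"
proof -
  have "mono_on {0<..t} (\<lambda>w. - rearr X w)"
    by (intro mono_onI) (use rearr_antimono[OF assms] in auto)
  then have "(\<lambda>w. - rearr X w) \<in> borel_measurable (restrict_space borel {0<..t})"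
    by (rule borel_measurable_mono_on_fnc)
  then have "(\<lambda>x. indicator {0<..t} x *\<^sub>R (- rearr X x)) \<in> borel_measurable borel"
    by (subst (asm) borel_measurable_restrict_space_iff) auto
  then have "(\<lambda>x. ennreal (- (indicator {0<..t} x *\<^sub>R (- rearr X x)))) \<in> borel_measurable borel"
    by measurable
  moreover have "(\<lambda>x. ennreal (- (indicator {0<..t} x *\<^sub>R (- rearr X x)))) = 
     (\<lambda>w. ennreal (rearr X w) * indicator {0<..t} w)"
    by (auto simp: indicator_def)
  ultimately show ?thesis by simp
qed

lemma rint_le_SUP:
  assumes "X \<in> rv"
  shows "rint X 0 1 \<le> (SUP n::nat. rint X 0 (1 - 1 / (real n + 2)))"
proof -
  define f where "f n w = ennreal (rearr X w) * indicator {0<..1 - 1 / (real n + 2)} w" for n :: nat and w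
  have inc: "incseq f"
  proof (intro incseq_SucI le_funI)
    fix n w
    have "1 - 1 / (real n + 2) \<le> 1 - 1 / (real (Suc n) + 2)"
      by (simp add: field_simps)
    then show "f n w \<le> f (Suc n) w" unfolding f_def
      by (auto simp: indicator_def)
  qed
  have meas: "f n \<in> borel_measurable lborel" for n
    unfolding f_def by (rule rearr_meas[OF assms])
  have "rint X 0 1 \<le> (\<integral>\<^sup>+ w. (SUP n. f n w) \<partial>lborel)"
    unfolding rint_def
  proof (rule nn_integral_mono_AE)
    have "{0::real, 1} \<in> null_sets lborel" by (rule finite_imp_null_set_lborel) auto
    then show "AE x in lborel. ennreal (rearr X x) * indicator {0..1} x \<le> (SUP n. f n x)"
    proof (rule AE_I')
      show "{x \<in> space lborel. \<not> ennreal (rearr X x) * indicator {0..1} x \<le> (SUP n. f n x)} \<subseteq> {0, 1}"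
      proof -
        have "ennreal (rearr X x) * indicator {0..1} x \<le> (SUP n. f n x)" if x: "x \<notin> {0, 1}" for x
        proof (cases "x \<in> {0..1}")
          case False
          then show ?thesis by simp
        next
          case True
          then have x01: "0 < x" "x < 1" using x by auto
          obtain n :: nat where nx: "1 / (1 - x) < real n" using reals_Archimedean2 by blast
          have "1 / (real n + 2) < 1 - x"
          proof -
            have p: "0 < 1 / (1 - x)" using x01 by simp
            have "1 / (real n + 2) < 1 / (1 / (1 - x))"
              by (rule divide_strict_left_mono) (use p nx in auto)
            then show ?thesis using x01 by simp
          qed
          then have "f n x = ennreal (rearr X x) * indicator {0..1} x"
            using x01 unfolding f_def by (auto simp: indicator_def)
          then show ?thesis by (metis UNIV_I SUP_upper)
        qed
        then show ?thesis by blast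
      qed
    qed
  qed
  also have "\<dots> = (SUP n. integral\<^sup>N lborel (f n))"
    by (rule nn_integral_monotone_convergence_SUP[OF inc meas])
  also have "\<dots> \<le> (SUP n::nat. rint X 0 (1 - 1 / (real n + 2)))"
    unfolding rint_def f_def
  proof (rule SUP_mono)
    fix n :: nat
    show "\<exists>m\<in>UNIV. (\<integral>\<^sup>+ w. ennreal (rearr X w) * indicator {0<..1 - 1 / (real n + 2)} w \<partial>lborel)
        \<le> (\<integral>\<^sup>+ w. ennreal (rearr X w) * indicator {0..1 - 1 / (real m + 2)} w \<partial>lborel)"
      by (rule bexI[of _ n], rule nn_integral_mono) (auto simp: indicator_def)
  qed
  finally show ?thesis .
qed

lemma M_le_TM:
  assumes "X \<in> rv" "concave_on {0..1} \<phi>" "\<phi> 0 = 0" "\<phi> 1 = 1"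
  shows "M_norm \<phi> X \<le> TM_norm \<phi> X"
proof -
  have term_le: "ennreal (\<phi> t / t) * rint X 0 t \<le> TM_norm \<phi> X" if t: "t \<in> {0<..<1}" for t
  proof -
    have "ennreal (\<phi> t / t) * rint X 0 t \<le> ennreal (\<phi> t / t) * rint X 0 t
                                  + ennreal ((\<phi> t - 1) / (t - 1)) * rint X t 1" by simp
    also have "\<dots> \<le> TM_norm \<phi> X" unfolding TM_norm_def by (rule SUP_upper[OF t])
    finally show ?thesis .
  qed
  have rint_le: "rint X 0 t \<le> TM_norm \<phi> X" if t: "t \<in> {0<..<1}" for t
  proof -
    have "t \<le> \<phi> t" using phi_ge[OF assms(2-4)] t by auto
    then have "1 \<le> \<phi> t / t" using t by simp
    then have "ennreal 1 \<le> ennreal (\<phi> t / t)" by (rule ennreal_leI)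
    then have "ennreal 1 * rint X 0 t \<le> ennreal (\<phi> t / t) * rint X 0 t"
      by (rule mult_right_mono) simp
    then have "rint X 0 t \<le> ennreal (\<phi> t / t) * rint X 0 t" by simp
    then show ?thesis using term_le[OF t] by (rule order_trans)
  qed
  show ?thesis unfolding M_norm_def
  proof (rule SUP_least)
    fix t :: real assume t: "t \<in> {0<..1}"
    show "ennreal (\<phi> t / t) * rint X 0 t \<le> TM_norm \<phi> X"
    proof (cases "t = 1")
      case False
      then show ?thesis using t term_le by auto
    next
      case True
      have "rint X 0 1 \<le> (SUP n::nat. rint X 0 (1 - 1 / (real n + 2)))"
        by (rule rint_le_SUP[OF assms(1)])
      also have "\<dots> \<le> TM_norm \<phi> X"
      proof (rule SUP_least)
        fix n :: nat
        have "1 / (real n + 2) < 1" "0 < 1 / (real n + 2)" by (auto simp: field_simps)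
        then show "rint X 0 (1 - 1 / (real n + 2)) \<le> TM_norm \<phi> X"
          by (intro rint_le) auto
      qed
      finally show ?thesis using True assms(4) by simp
    qed
  qed
qed

lemma TM_le_M:
  assumes "concave_on {0..1} \<phi>" "\<phi> 0 = 0" "\<phi> 1 = 1" "\<phi> ` {0..1} \<subseteq> {0..1}"
  shows "TM_norm \<phi> X \<le> ennreal 2 * M_norm \<phi> X"
  unfolding TM_norm_def
proof (rule SUP_least)
  fix t :: real assume t: "t \<in> {0<..<1}"
  have a: "ennreal (\<phi> t / t) * rint X 0 t \<le> M_norm \<phi> X"
    unfolding M_norm_def by (rule SUP_upper) (use t in auto)
  have r1: "rint X 0 1 \<le> M_norm \<phi> X"
    unfolding M_norm_def using SUP_upper[of 1 "{0<..1}" "\<lambda>t. ennreal (\<phi> t / t) * rint X 0 t"] assms(3)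
    by simp
  have "t \<le> \<phi> t" using phi_ge[OF assms(1-3)] t by auto
  moreover have "\<phi> t \<le> 1" using assms(4) t by (auto simp: image_subset_iff)
  ultimately have s1: "(\<phi> t - 1) / (t - 1) \<le> 1" using t by (subst divide_le_eq) auto
  have "rint X t 1 \<le> rint X 0 1" unfolding rint_def
    by (rule nn_integral_mono) (use t in \<open>auto simp: indicator_def\<close>)
  then have "ennreal ((\<phi> t - 1) / (t - 1)) * rint X t 1 \<le> 1 * rint X 0 1"
    by (intro mult_mono) (use s1 in \<open>auto intro: ennreal_leI[where y=1, simplified]\<close>)
  then have b: "ennreal ((\<phi> t - 1) / (t - 1)) * rint X t 1 \<le> M_norm \<phi> X" using r1 by simp
  have "ennreal (\<phi> t / t) * rint X 0 t + ennreal ((\<phi> t - 1) / (t - 1)) * rint X t 1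
     \<le> M_norm \<phi> X + M_norm \<phi> X" by (rule add_mono[OF a b])
  also have "\<dots> = ennreal 2 * M_norm \<phi> X" by (simp add: mult_2)
  finally show "ennreal (\<phi> t / t) * rint X 0 t + ennreal ((\<phi> t - 1) / (t - 1)) * rint X t 1
     \<le> ennreal 2 * M_norm \<phi> X" .
qed

lemma ratio_key:
  fixes \<phi> :: "real \<Rightarrow> real"
  assumes "\<phi> ` {0..1} \<subseteq> {0..1}"
    and cc: "concave_on {0..1} \<phi>"
    and p0: "\<phi> 0 = 0" and p1: "\<phi> 1 = 1"
    and ct: "continuous (at 0 within {0..1}) \<phi>"
    and lim: "filterlim (\<lambda>h. (\<phi> h - \<phi> 0) / h) at_top (at_right 0)"
    and K: "K > 0"
  shows "\<exists>t\<in>{0<..<1}. \<forall>t'\<in>{0<..1}. \<exists>\<alpha>\<in>{0<..1}. K \<le> phiTM \<phi> t \<alpha> / phiM \<phi> t' \<alpha>"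
proof -
  have le1: "\<phi> s \<le> 1" if "s \<in> {0..1}" for s using assms(1) that by (auto simp: image_subset_iff)
  have ge: "s \<le> \<phi> s" if "s \<in> {0..1}" for s using phi_ge[OF cc p0 p1] that by auto
  obtain d0 where d0: "d0 > 0" "\<And>x. x \<in> {0..1} \<Longrightarrow> dist x 0 < d0 \<Longrightarrow> dist (\<phi> x) (\<phi> 0) < 1 / K"
    using ct K unfolding continuous_within_eps_delta by (meson divide_pos_pos zero_less_one)
  define d where "d = min d0 1"
  have d: "0 < d" "d \<le> 1" using d0 unfolding d_def by auto
  have small: "\<phi> s < 1 / K" if "s \<in> {0..1}" "s < d" for s
    using d0(2)[of s] that p0 ge[of s] unfolding d_def by (auto simp: dist_real_def)
  have "eventually (\<lambda>h. K / d \<le> (\<phi> h - \<phi> 0) / h) (at_right 0)"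
    using lim unfolding filterlim_at_top by blast
  then obtain b where b: "b > 0" "\<And>y. y > 0 \<Longrightarrow> y < b \<Longrightarrow> K / d \<le> (\<phi> y - \<phi> 0) / y"
    unfolding eventually_at_right_field by blast
  define t where "t = min (b / 2) (1 / 2)"
  have t: "0 < t" "t < 1" "t < b" using b unfolding t_def by auto
  have tK: "K / d \<le> \<phi> t / t" using b(2)[OF t(1) t(3)] p0 by simp
  show ?thesis
  proof (rule bexI[where x=t])
    show "t \<in> {0<..<1}" using t by auto
    show "\<forall>t'\<in>{0<..1}. \<exists>\<alpha>\<in>{0<..1}. K \<le> phiTM \<phi> t \<alpha> / phiM \<phi> t' \<alpha>"
    proof
    fix t' :: real assume t': "t' \<in> {0<..1}"
    have pt'pos: "0 < \<phi> t'" using ge[of t'] t' by auto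
    have pt'1: "\<phi> t' \<le> 1" using le1[of t'] t' by auto
    show "\<exists>\<alpha>\<in>{0<..1}. K \<le> phiTM \<phi> t \<alpha> / phiM \<phi> t' \<alpha>"
    proof (cases "\<phi> t' \<le> 1 / K")
      case True
      have a: "phiTM \<phi> t 1 = 1" using t unfolding phiTM_def by (simp add: field_simps)
      have b: "phiM \<phi> t' 1 = \<phi> t'" using t' unfolding phiM_def by auto
      have "K \<le> 1 / \<phi> t'" using True pt'pos K by (simp add: field_simps)
      then show ?thesis using a b by (intro bexI[of _ 1]) auto
    next
      case False
      then have t'd: "d \<le> t'" using small[of t'] t' by force
      define \<alpha> where "\<alpha> = min t t'"
      have al: "0 < \<alpha>" "\<alpha> \<le> t" "\<alpha> \<le> t'" "\<alpha> \<le> 1" using t t' unfolding \<alpha>_def by auto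
      have a: "phiTM \<phi> t \<alpha> = \<phi> t * \<alpha> / t" using al unfolding phiTM_def by simp
      have b: "phiM \<phi> t' \<alpha> = \<phi> t' * \<alpha> / t'" using al unfolding phiM_def by simp
      have r: "phiTM \<phi> t \<alpha> / phiM \<phi> t' \<alpha> = (\<phi> t / t) * (t' / \<phi> t')"
        unfolding a b using al t t' pt'pos by (simp add: field_simps)
      have "t' * \<phi> t' \<le> t'" using pt'1 t' by (simp add: mult_left_le)
      then have "t' \<le> t' / \<phi> t'" using pt'pos by (simp add: le_divide_eq)
      then have "t' / \<phi> t' \<ge> d" using t'd by linarith
      have "0 < K / d" using K d by simp
      then have "0 \<le> \<phi> t / t" using tK by linarith
      have "K = (K / d) * d" using d by simp
      also have "\<dots> \<le> (\<phi> t / t) * (t' / \<phi> t')"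
        by (rule mult_mono) (use tK \<open>t' / \<phi> t' \<ge> d\<close> \<open>0 \<le> \<phi> t / t\<close> d K in auto)
      finally show ?thesis using r al by (intro bexI[of _ \<alpha>]) auto
    qed
    qed
  qed
qed

theorem theorem30:
  fixes \<phi> :: "real \<Rightarrow> real"
  assumes "\<phi> ` {0..1} \<subseteq> {0..1}"
    and "concave_on {0..1} \<phi>"
    and "\<phi> 0 = 0" and "\<phi> 1 = 1"
    and "continuous (at 0 within {0..1}) \<phi>"
    and "filterlim (\<lambda>h. (\<phi> h - \<phi> 0) / h) at_top (at_right 0)"
  shows "norm_equiv (M_norm \<phi>) (TM_norm \<phi>) \<and>
         (SUP t\<in>{0<..<1}. INF t'\<in>{0<..1}. SUP \<alpha>\<in>{0<..1}.
             ereal (phiTM \<phi> t \<alpha> / phiM \<phi> t' \<alpha>)) = (\<infinity>::ereal)"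
proof
  have A: "M_norm \<phi> X \<le> TM_norm \<phi> X" if "X \<in> rv" for X
    using M_le_TM[OF that assms(2-4)] .
  have B: "TM_norm \<phi> X \<le> ennreal 2 * M_norm \<phi> X" for X
    using TM_le_M[OF assms(2-4) assms(1)] .
  show "norm_equiv (M_norm \<phi>) (TM_norm \<phi>)"
    unfolding norm_equiv_def
  proof (intro conjI)
    show "\<forall>X\<in>rv. (M_norm \<phi> X < \<infinity>) = (TM_norm \<phi> X < \<infinity>)"
    proof
    fix X assume X: "X \<in> rv"
    show "(M_norm \<phi> X < \<infinity>) = (TM_norm \<phi> X < \<infinity>)"
    proof
      assume "M_norm \<phi> X < \<infinity>"
      then have "ennreal 2 * M_norm \<phi> X < \<infinity>"
        by (simp add: ennreal_mult_less_top)
      then show "TM_norm \<phi> X < \<infinity>" using B[of X] by order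
    next
      assume "TM_norm \<phi> X < \<infinity>"
      then show "M_norm \<phi> X < \<infinity>" using A[OF X] by order
    qed
    qed
  next
    show "\<exists>c1 c2::real. c1 > 0 \<and> c2 > 0 \<and>
        (\<forall>X\<in>rv. M_norm \<phi> X < \<infinity> \<longrightarrow> M_norm \<phi> X \<le> ennreal c1 * TM_norm \<phi> X \<and> TM_norm \<phi> X \<le> ennreal c2 * M_norm \<phi> X)"
      using A B by (intro exI[of _ 1] exI[of _ 2]) auto
  qed
next
  let ?S = "(SUP t\<in>{0<..<1}. INF t'\<in>{0<..1}. SUP \<alpha>\<in>{0<..1}.
             ereal (phiTM \<phi> t \<alpha> / phiM \<phi> t' \<alpha>))"
  have "?S = top"
    unfolding SUP_eq_top_iff
  proof (intro allI impI)
    fix x :: ereal assume "x < top"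
    define K where "K = max 1 (real_of_ereal x + 1)"
    have K: "K > 0" unfolding K_def by simp
    have xK: "x < ereal K"
    proof -
      have "real_of_ereal x < K" unfolding K_def by simp
      then show ?thesis using \<open>x < top\<close> by (cases x) auto
    qed
    obtain t where t: "t \<in> {0<..<1}"
      and tt: "\<forall>t'\<in>{0<..1}. \<exists>\<alpha>\<in>{0<..1}. K \<le> phiTM \<phi> t \<alpha> / phiM \<phi> t' \<alpha>"
      using ratio_key[OF assms K] by blast
    have "ereal K \<le> (INF t'\<in>{0<..1}. SUP \<alpha>\<in>{0<..1}. ereal (phiTM \<phi> t \<alpha> / phiM \<phi> t' \<alpha>))"
    proof (rule INF_greatest)
      fix t' assume "t' \<in> {0<..1::real}"
      then obtain \<alpha> where al: "\<alpha> \<in> {0<..1}" "K \<le> phiTM \<phi> t \<alpha> / phiM \<phi> t' \<alpha>" using tt by blast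
      show "ereal K \<le> (SUP \<alpha>\<in>{0<..1}. ereal (phiTM \<phi> t \<alpha> / phiM \<phi> t' \<alpha>))"
        by (rule SUP_upper2[OF al(1)]) (use al(2) in simp)
    qed
    then show "\<exists>i\<in>{0<..<1}. x < (INF t'\<in>{0<..1}. SUP \<alpha>\<in>{0<..1}. ereal (phiTM \<phi> i \<alpha> / phiM \<phi> t' \<alpha>))"
      using t xK by (intro bexI[of _ t]) auto
  qed
  then show "?S = \<infinity>" by (simp add: top_ereal_def)
qed

end
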